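(* Let $n\ge2$, $\mathbf{a}\in\mathbb{C}^n$, $\beta>0$ and $f(\mathbf{z})=\frac12|\mathbf{a}^*\mathbf{z}|^2+\frac{\beta}{2}\|\mathbf{z}\|_4^4$ on $\mathbb{CS}^{n-1}$. Suppose that $\|\mathbf{a}\|_\infty>\frac12\|\mathbf{a}\|_1$ and that it is not the case that $\mathbf{a}$ has exactly one nonzero component with $\|\mathbf{a}\|_2^2\ge2\beta/(n-1)$. Then every consistent local minimizer of $f$ on $\mathbb{CS}^{n-1}$ is a global minimizer.
   Context: $\mathbb{CS}^{n-1}=\{\mathbf{z}\in\mathbb{C}^n:\|\mathbf{z}\|_2=1\}$. A stationary point $\mathbf{z}$ (i.e. $(\mathbf{a}^*\mathbf{z})\mathbf{a}+2\beta\,\mathrm{diag}(|z_1|^2,\dots,|z_n|^2)\mathbf{z}=2\lambda\mathbf{z}$ with $2\lambda=|\mathbf{a}^*\mathbf{z}|^2+2\beta\|\mathbf{z}\|_4^4$) is called consistent if $\bar a_kz_k\in\mathbb{R}$ for all $k$ with $a_k\neq0$ and $z_k\in\mathbb{R}$ for all $k$ with $a_k=0$. *)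

theory Defs
  imports "HOL-Analysis.Analysis"
begin

text \<open>Vectors in C^n are modelled as complex^'n; the norm on this type is the Euclidean 2-norm.\<close>

definition adj_dot :: "complex^'n \<Rightarrow> complex^'n \<Rightarrow> complex" where
  "adj_dot a z = (\<Sum>k\<in>UNIV. cnj (a$k) * z$k)"

definition norm4_pow4 :: "complex^'n \<Rightarrow> real" where
  "norm4_pow4 z = (\<Sum>k\<in>UNIV. (cmod (z$k))^4)"

definition norm1 :: "complex^'n \<Rightarrow> real" where
  "norm1 a = (\<Sum>k\<in>UNIV. cmod (a$k))"

definition norm_inf :: "complex^'n \<Rightarrow> real" where
  "norm_inf a = Max (range (\<lambda>k. cmod (a$k)))"

definition fobj :: "complex^'n \<Rightarrow> real \<Rightarrow> complex^'n \<Rightarrow> real" where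
  "fobj a \<beta> z = 1/2 * (cmod (adj_dot a z))^2 + \<beta>/2 * norm4_pow4 z"

text \<open>Stationary point equation, componentwise:
  (a^* z) a_k + 2 beta |z_k|^2 z_k = 2 lambda z_k with 2 lambda = |a^* z|^2 + 2 beta ||z||_4^4.\<close>
definition stationary_pt :: "complex^'n \<Rightarrow> real \<Rightarrow> complex^'n \<Rightarrow> bool" where
  "stationary_pt a \<beta> z \<longleftrightarrow> norm z = 1 \<and>
     (\<forall>k. adj_dot a z * a$k + complex_of_real (2 * \<beta> * (cmod (z$k))^2) * z$k
          = complex_of_real ((cmod (adj_dot a z))^2 + 2 * \<beta> * norm4_pow4 z) * z$k)"

definition consistent_pt :: "complex^'n \<Rightarrow> real \<Rightarrow> complex^'n \<Rightarrow> bool" where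
  "consistent_pt a \<beta> z \<longleftrightarrow> stationary_pt a \<beta> z \<and>
     (\<forall>k. (a$k \<noteq> 0 \<longrightarrow> cnj (a$k) * z$k \<in> \<real>) \<and> (a$k = 0 \<longrightarrow> z$k \<in> \<real>))"

definition local_min_on :: "'a::metric_space set \<Rightarrow> ('a \<Rightarrow> real) \<Rightarrow> 'a \<Rightarrow> bool" where
  "local_min_on S f z \<longleftrightarrow> z \<in> S \<and> (\<exists>e>0. \<forall>w\<in>S. dist w z < e \<longrightarrow> f z \<le> f w)"

definition global_min_on :: "'a set \<Rightarrow> ('a \<Rightarrow> real) \<Rightarrow> 'a \<Rightarrow> bool" where
  "global_min_on S f z \<longleftrightarrow> z \<in> S \<and> (\<forall>w\<in>S. f z \<le> f w)"

end

theory Submission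
  imports Defs
begin


lemma norm_sq_vec: "(norm (x::complex^'n))^2 = (\<Sum>k\<in>UNIV. (cmod (x$k))^2)"
  unfolding norm_vec_def L2_set_def by (simp add: sum_nonneg)

lemma sum_if_eq:
  fixes p q :: "'n::finite \<Rightarrow> 'b::ab_group_add"
  shows "(\<Sum>i\<in>UNIV. (if i = j then p i else q i)) = (\<Sum>i\<in>UNIV. q i) - q j + p j"
proof -
  have "(\<Sum>i\<in>UNIV. (if i = j then p i else q i)) = (\<Sum>i\<in>UNIV. q i + (if i = j then p i - q i else 0))"
    by (rule sum.cong) auto
  also have "\<dots> = (\<Sum>i\<in>UNIV. q i) + (p j - q j)"
    by (simp add: sum.distrib)
  finally show ?thesis by simp
qed

definition upd :: "complex^'n \<Rightarrow> 'n \<Rightarrow> complex \<Rightarrow> complex^'n" where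
  "upd z j u = (\<chi> i. if i = j then u else z$i)"

lemma upd_nth: "(upd z j u)$i = (if i = j then u else z$i)"
  by (simp add: upd_def)

lemma adj_dot_upd: "adj_dot a (upd z j u) = adj_dot a z + cnj (a$j) * (u - z$j)"
proof -
  have "adj_dot a (upd z j u) = (\<Sum>i\<in>UNIV. (if i = j then cnj (a$i) * u else cnj (a$i) * z$i))"
    unfolding adj_dot_def by (rule sum.cong) (auto simp: upd_nth)
  also have "\<dots> = adj_dot a z - cnj (a$j) * z$j + cnj (a$j) * u"
    by (subst sum_if_eq) (simp add: adj_dot_def)
  finally show ?thesis by (simp add: algebra_simps)
qed

lemma n4_upd: "norm4_pow4 (upd z j u) = norm4_pow4 z - (cmod (z$j))^4 + (cmod u)^4"
proof -
  have "norm4_pow4 (upd z j u) = (\<Sum>i\<in>UNIV. (if i = j then (cmod u)^4 else (cmod (z$i))^4))"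
    unfolding norm4_pow4_def by (rule sum.cong) (auto simp: upd_nth)
  also have "\<dots> = norm4_pow4 z - (cmod (z$j))^4 + (cmod u)^4"
    by (subst sum_if_eq) (simp add: norm4_pow4_def)
  finally show ?thesis .
qed

lemma nsq_upd: "(norm (upd z j u))^2 = (norm z)^2 - (cmod (z$j))^2 + (cmod u)^2"
proof -
  have "(norm (upd z j u))^2 = (\<Sum>i\<in>UNIV. (if i = j then (cmod u)^2 else (cmod (z$i))^2))"
    unfolding norm_sq_vec by (rule sum.cong) (auto simp: upd_nth)
  also have "\<dots> = (norm z)^2 - (cmod (z$j))^2 + (cmod u)^2"
    by (subst sum_if_eq) (simp add: norm_sq_vec)
  finally show ?thesis .
qed

lemma dist_upd: "dist (upd z j u) z = cmod (u - z$j)"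
proof -
  have "(norm (upd z j u - z))^2 = (\<Sum>i\<in>UNIV. (if i = j then (cmod (u - z$j))^2 else 0))"
    unfolding norm_sq_vec by (rule sum.cong) (auto simp: upd_nth)
  also have "\<dots> = (cmod (u - z$j))^2" by simp
  finally have "(norm (upd z j u - z))^2 = (cmod (u - z$j))^2" .
  then have "norm (upd z j u - z) = cmod (u - z$j)"
    by (metis norm_ge_zero power2_eq_iff_nonneg)
  then show ?thesis by (simp add: dist_norm)
qed

lemma scaleR_nth: "(r *\<^sub>R (w::complex^'n))$k = of_real r * w$k"
  by (simp only: vector_scaleR_component) (simp add: scaleR_conv_of_real)

lemma adj_dot_scaleR: "adj_dot a (r *\<^sub>R w) = of_real r * adj_dot a w"
  unfolding adj_dot_def scaleR_nth by (simp add: sum_distrib_left algebra_simps)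

lemma n4_scaleR: "norm4_pow4 (r *\<^sub>R w) = r^4 * norm4_pow4 w"
  unfolding norm4_pow4_def by (simp add: sum_distrib_left power_mult_distrib abs_mult vector_scaleR_component)

lemma adj_dot_uminus: "adj_dot a (- w) = - adj_dot a w"
  unfolding adj_dot_def by (simp add: sum_negf)

lemma n4_uminus: "norm4_pow4 (- w) = norm4_pow4 w"
  unfolding norm4_pow4_def by simp

lemma fobj_uminus: "fobj a b (- w) = fobj a b w"
  unfolding fobj_def by (simp add: adj_dot_uminus n4_uminus)

definition rot :: "real \<Rightarrow> complex" where
  "rot x = Complex ((1 - x^2)/(1 + x^2)) (2*x/(1+x^2))"

lemma rot_norm: "cmod (rot x) = 1"
proof -
  have h: "1 + x^2 > 0" by (simp add: add_pos_nonneg)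
  have e: "(1 - x^2)^2 + (2*x)^2 = (1+x^2)^2" by algebra
  have "((1 - x^2)/(1 + x^2))^2 + (2*x/(1+x^2))^2 = ((1 - x^2)^2 + (2*x)^2)/(1+x^2)^2"
    by (simp add: power_divide add_divide_distrib)
  also have "\<dots> = 1" using h by (simp only: e) simp
  finally have "((1 - x^2)/(1 + x^2))^2 + (2*x/(1+x^2))^2 = 1" .
  then show ?thesis unfolding rot_def cmod_def by simp
qed

lemma rot_m1_sq: "(cmod (rot x - 1))^2 = 4*x^2/(1+x^2)"
proof -
  have h: "1 + x^2 > 0" by (simp add: add_pos_nonneg)
  have e1: "(1 - x^2)/(1 + x^2) - 1 = (-2*x^2)/(1+x^2)" using h by (simp add: field_simps)
  have e: "(-2*x^2)^2 + (2*x)^2 = (4*x^2)*(1+x^2)" by algebra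
  have "((1 - x^2)/(1 + x^2) - 1)^2 + (2*x/(1+x^2))^2 = ((-2*x^2)^2 + (2*x)^2)/(1+x^2)^2"
    unfolding e1 by (simp add: power_divide add_divide_distrib)
  also have "\<dots> = 4*x^2/(1+x^2)" using h unfolding e by (simp add: power2_eq_square)
  finally have "((1 - x^2)/(1 + x^2) - 1)^2 + (2*x/(1+x^2))^2 = 4*x^2/(1+x^2)" .
  then show ?thesis unfolding rot_def cmod_def by (simp add: one_complex.code)
qed

lemma rot_m1_le: "cmod (rot x - 1) \<le> 2 * \<bar>x\<bar>"
proof -
  have h: "1 + x^2 \<ge> 1" by simp
  have "(cmod (rot x - 1))^2 \<le> (2*\<bar>x\<bar>)^2"
  proof -
    have h': "1 + x^2 > 0" by (simp add: add_pos_nonneg)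
    have "4*x^2/(1+x^2) \<le> 4*x^2" using h h' by (simp add: divide_le_eq mult_le_cancel_left1)
    then show ?thesis unfolding rot_m1_sq by (simp add: power_mult_distrib)
  qed
  then show ?thesis by (rule power2_le_imp_le) simp
qed

lemma rot_m1_pos: "x \<noteq> 0 \<Longrightarrow> cmod (rot x - 1) > 0"
proof -
  assume "x \<noteq> 0"
  then have "(cmod (rot x - 1))^2 > 0" unfolding rot_m1_sq by (simp add: add_pos_nonneg)
  then show ?thesis by (metis norm_ge_zero power2_eq_square not_le order.not_eq_order_implies_strict zero_less_power2 norm_zero power_zero_numeral)
qed



lemma not_lmin_by:
  assumes "\<And>e. e > 0 \<Longrightarrow> \<exists>w. norm w = 1 \<and> dist w z < e \<and> fobj a b w < fobj a b z"
  shows "\<not> local_min_on (sphere 0 1) (fobj a b) z"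
proof
  assume "local_min_on (sphere 0 1) (fobj a b) z"
  then obtain e where e: "e > 0" "\<forall>w\<in>sphere 0 1. dist w z < e \<longrightarrow> fobj a b z \<le> fobj a b w"
    unfolding local_min_on_def by blast
  from assms[OF e(1)] obtain w where "norm w = 1" "dist w z < e" "fobj a b w < fobj a b z" by blast
  with e(2) show False by force
qed

lemma gd:
  fixes z w' :: "complex^'n"
  assumes nz: "norm z = 1" and b: "b > 0" and ad: "adj_dot a w' = adj_dot a z"
    and nw: "(norm w')^2 = 1 + P" and P: "P > 0"
    and q4: "norm4_pow4 w' \<le> norm4_pow4 z + P^2" and Pq: "P < 2 * norm4_pow4 z"
  shows "norm ((1/norm w') *\<^sub>R w') = 1 \<and> dist ((1/norm w') *\<^sub>R w') z \<le> P + dist w' z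
     \<and> fobj a b ((1/norm w') *\<^sub>R w') < fobj a b z"
proof -
  define N where "N = norm w'"
  have N2: "N^2 = 1 + P" using nw N_def by simp
  have N1: "N > 1"
  proof -
    have "N^2 > 1^2" using N2 P by simp
    then show ?thesis using N_def by (metis abs_of_nonneg norm_ge_zero power_less_imp_less_base zero_le_one)
  qed
  have Npos: "N > 0" using N1 by simp
  define w where "w = (1/N) *\<^sub>R w'"
  have nw1: "norm w = 1" unfolding w_def N_def using Npos N_def by simp
  have "dist w w' = N - 1"
  proof -
    have "w' - w = (1 - 1/N) *\<^sub>R w'" unfolding w_def by (simp add: algebra_simps)
    moreover have "1/N \<le> 1" using N1 by simp
    ultimately have "norm (w' - w) = (1 - 1/N) * N" using N1 N_def by simp
    also have "\<dots> = N - 1" using Npos by (simp add: field_simps)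
    finally show ?thesis by (simp add: dist_norm norm_minus_commute)
  qed
  moreover have "N - 1 \<le> P"
  proof -
    have "(N - 1) * 1 \<le> (N - 1) * (N + 1)" using N1 by (intro mult_left_mono) auto
    also have "\<dots> = N^2 - 1" by (simp add: algebra_simps power2_eq_square)
    finally show ?thesis using N2 by simp
  qed
  ultimately have dd: "dist w z \<le> P + dist w' z"
    using dist_triangle[of w z w'] by linarith
  define c where "c = cmod (adj_dot a z)"
  define Q where "Q = norm4_pow4 z"
  define Q' where "Q' = norm4_pow4 w'"
  have fw: "fobj a b w = 1/2 * c^2 / N^2 + b/2 * Q' / N^4"
    unfolding fobj_def w_def adj_dot_scaleR n4_scaleR c_def Q'_def ad
    using Npos by (simp add: norm_mult norm_divide power_divide field_simps)
  have fz: "fobj a b z = 1/2 * c^2 + b/2 * Q" unfolding fobj_def c_def Q_def by simp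
  have t1: "1/2 * c^2 / N^2 \<le> 1/2 * c^2"
  proof -
    have "c^2 * 2 \<le> c^2 * (2 + 2*P)" using P by (intro mult_left_mono) auto
    then show ?thesis using N2 P by (simp add: divide_le_eq)
  qed
  have N4: "N^4 = (1+P)^2" using N2 by (metis power_mult numeral_Bit0 numeral_One power2_eq_square mult_2 one_add_one)
  have "Q' < Q * (1+P)^2"
  proof -
    have "Q * (1+P)^2 - (Q + P^2) = P * (2*Q - P) + Q * P^2"
      by (simp add: algebra_simps power2_eq_square)
    moreover have "P * (2*Q - P) > 0" using P Pq Q_def by (intro mult_pos_pos) auto
    moreover have "Q * P^2 \<ge> 0" unfolding Q_def norm4_pow4_def by (simp add: sum_nonneg)
    ultimately show ?thesis using q4 Q_def Q'_def by linarith
  qed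
  then have "Q' / N^4 < Q" unfolding N4 using P by (simp add: divide_less_eq add_pos_nonneg)
  then have "b/2 * (Q' / N^4) < b/2 * Q" using b by (intro mult_strict_left_mono) auto
  then have t2: "b/2 * Q' / N^4 < b/2 * Q" by simp
  have "fobj a b w < fobj a b z" unfolding fw fz using t1 t2 by linarith
  then show ?thesis using nw1 dd unfolding w_def N_def by simp
qed

lemma gd_ex:
  fixes z w' :: "complex^'n"
  assumes "norm z = 1" "b > 0" "adj_dot a w' = adj_dot a z"
    "(norm w')^2 = 1 + P" "P > 0"
    "norm4_pow4 w' \<le> norm4_pow4 z + P^2" "P < 2 * norm4_pow4 z"
  shows "\<exists>w. norm w = 1 \<and> dist w z \<le> P + dist w' z \<and> fobj a b w < fobj a b z"
  using gd[OF assms] by blast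



lemma q4_pos:
  fixes z :: "complex^'n"
  assumes "norm z = 1" shows "norm4_pow4 z > 0"
proof -
  have "\<exists>k. z$k \<noteq> 0"
  proof (rule ccontr)
    assume "\<not> (\<exists>k. z$k \<noteq> 0)"
    then have "z = 0" by (simp add: vec_eq_iff)
    with assms show False by simp
  qed
  then obtain k where k: "z$k \<noteq> 0" by blast
  have "(cmod (z$k))^4 \<le> norm4_pow4 z"
    unfolding norm4_pow4_def by (rule member_le_sum) auto
  moreover have "(cmod (z$k))^4 > 0" using k by simp
  ultimately show ?thesis by linarith
qed

lemma comp_le1: "norm (z::complex^'n) = 1 \<Longrightarrow> cmod (z$k) \<le> 1"
  using Finite_Cartesian_Product.norm_nth_le[of z k] by simp

lemma zero_coord:
  fixes z :: "complex^'n"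
  assumes nz: "norm z = 1" and b: "b > 0" and ak: "a$k = 0" and zk: "z$k = 0"
  shows "\<not> local_min_on (sphere 0 1) (fobj a b) z"
proof (rule not_lmin_by)
  fix e :: real assume e: "e > 0"
  define Q where "Q = norm4_pow4 z"
  have Q: "Q > 0" using q4_pos[OF nz] Q_def by simp
  define p where "p = min (1/2) (min (Q/2) (e/3))"
  have p: "p > 0" "p \<le> 1/2" "p \<le> Q/2" "p \<le> e/3" using Q e unfolding p_def by auto
  define w' where "w' = upd z k (of_real p)"
  have ad: "adj_dot a w' = adj_dot a z" unfolding w'_def adj_dot_upd ak by simp
  have nw: "(norm w')^2 = 1 + p^2" unfolding w'_def nsq_upd nz zk using p by simp
  have q4: "norm4_pow4 w' \<le> norm4_pow4 z + (p^2)^2" unfolding w'_def n4_upd zk using p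
    by (simp add: power_mult[symmetric])
  have pp: "p^2 \<le> p" using p by (simp add: power2_eq_square mult_left_le)
  have Pq: "p^2 < 2 * norm4_pow4 z" using pp p Q Q_def by linarith
  have dw: "dist w' z = p" unfolding w'_def dist_upd zk using p by simp
  have p2: "p^2 > 0" using p by simp
  from gd_ex[OF nz b ad nw p2 q4 Pq]
  obtain w where "norm w = 1" "dist w z \<le> p^2 + p" "fobj a b w < fobj a b z"
    unfolding dw by blast
  moreover have "p^2 + p < e" using pp p e by linarith
  ultimately show "\<exists>w. norm w = 1 \<and> dist w z < e \<and> fobj a b w < fobj a b z" by force
qed

lemma cnj_mult_self: "cnj x * x = of_real ((cmod x)^2)"
  by (metis complex_norm_square mult.commute of_real_power)

lemma c0_rot:
  fixes z :: "complex^'n"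
  assumes nz: "norm z = 1" and b: "b > 0" and c0: "adj_dot a z = 0" and zm: "z$m = 0"
    and am: "a$m \<noteq> 0" and km: "k \<noteq> m" and vk: "cnj (a$k) * z$k \<noteq> 0"
  shows "\<not> local_min_on (sphere 0 1) (fobj a b) z"
proof (rule not_lmin_by)
  fix e :: real assume e: "e > 0"
  define Q where "Q = norm4_pow4 z"
  have Q: "Q > 0" using q4_pos[OF nz] Q_def by simp
  define v where "v = cnj (a$k) * z$k"
  define al where "al = cmod (a$m)"
  have al: "al > 0" using am al_def by simp
  define K where "K = 2 * cmod v / al + 2"
  have K: "K \<ge> 2" using al unfolding K_def by simp
  define d where "d = min (1/2) (min (Q/2) (e/4))"
  have d: "d > 0" "d \<le> 1/2" "d \<le> Q/2" "d \<le> e/4" using Q e unfolding d_def by auto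
  define x where "x = d / K"
  have x: "x > 0" using d K unfolding x_def by simp
  have Kx: "K * x = d" using K unfolding x_def by simp
  define \<omega> where "\<omega> = rot x"
  have om1: "cmod \<omega> = 1" unfolding \<omega>_def by (rule rot_norm)
  have omle: "cmod (\<omega> - 1) \<le> 2 * x" unfolding \<omega>_def using rot_m1_le[of x] x by simp
  have ompos: "cmod (\<omega> - 1) > 0" unfolding \<omega>_def using rot_m1_pos[of x] x by simp
  define u where "u = - v * (\<omega> - 1) * a$m / of_real (al^2)"
  define w1 where "w1 = upd z k (z$k * \<omega>)"
  define w' where "w' = upd w1 m u"
  have w1m: "w1$m = 0" unfolding w1_def upd_nth using km zm by simp
  have ad1: "adj_dot a w1 = v * (\<omega> - 1)" unfolding w1_def adj_dot_upd c0 v_def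
    by (simp add: algebra_simps)
  have "cnj (a$m) * u = - v * (\<omega> - 1) * (cnj (a$m) * a$m) / of_real (al^2)"
    unfolding u_def by (simp add: algebra_simps)
  also have "\<dots> = - v * (\<omega> - 1)" unfolding cnj_mult_self al_def[symmetric] using al by simp
  finally have cu: "cnj (a$m) * u = - v * (\<omega> - 1)" .
  have ad: "adj_dot a w' = adj_dot a z" unfolding w'_def adj_dot_upd ad1 w1m c0 using cu by simp
  define pi where "pi = cmod v * cmod (\<omega> - 1) / al"
  have cmu: "cmod u = pi" unfolding u_def pi_def using al
    by (simp add: norm_mult norm_divide norm_power al_def power2_eq_square)
  have pipos: "pi > 0" unfolding pi_def using vk v_def ompos al by simp
  have nw1: "(norm w1)^2 = 1" unfolding w1_def nsq_upd nz using om1 by (simp add: norm_mult)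
  have nw: "(norm w')^2 = 1 + pi^2" unfolding w'_def nsq_upd nw1 w1m cmu by simp
  have q1: "norm4_pow4 w1 = norm4_pow4 z" unfolding w1_def n4_upd using om1 by (simp add: norm_mult)
  have q4: "norm4_pow4 w' \<le> norm4_pow4 z + (pi^2)^2" unfolding w'_def n4_upd q1 w1m cmu
    by (simp add: power_mult[symmetric])
  have pile: "pi \<le> d"
  proof -
    have "pi \<le> cmod v * (2*x) / al" unfolding pi_def using al omle
      by (intro divide_right_mono mult_left_mono) auto
    also have "\<dots> \<le> K * x" unfolding K_def using x al by (simp add: field_simps)
    finally show ?thesis using Kx by simp
  qed
  have pp: "pi^2 \<le> pi" using pile d pipos by (simp add: power2_eq_square mult_left_le)
  have Pq: "pi^2 < 2 * norm4_pow4 z" using pp pile d Q Q_def by linarith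
  have dw: "dist w' z \<le> pi + 2 * x"
  proof -
    have "dist w' w1 = pi" unfolding w'_def dist_upd w1m using cmu by simp
    moreover have "dist w1 z \<le> 2 * x"
    proof -
      have "dist w1 z = cmod (z$k) * cmod (\<omega> - 1)" unfolding w1_def dist_upd
        by (simp add: norm_mult[symmetric] algebra_simps)
      also have "\<dots> \<le> 1 * (2*x)" using comp_le1[OF nz, of k] omle
        by (intro mult_mono) auto
      finally show ?thesis by simp
    qed
    ultimately show ?thesis using dist_triangle[of w' z w1] by linarith
  qed
  have p2: "pi^2 > 0" using pipos by simp
  from gd_ex[OF nz b ad nw p2 q4 Pq]
  obtain w where "norm w = 1" "dist w z \<le> pi^2 + dist w' z" "fobj a b w < fobj a b z"
    by blast
  moreover have "pi^2 + dist w' z < e"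
  proof -
    have "2 * x \<le> K * x" using K x by (intro mult_right_mono) auto
    then show ?thesis using dw pp pile d Kx e by linarith
  qed
  ultimately show "\<exists>w. norm w = 1 \<and> dist w z < e \<and> fobj a b w < fobj a b z" by force
qed



lemma c0_two:
  fixes z :: "complex^'n"
  assumes nz: "norm z = 1" and b: "b > 0" and c0: "adj_dot a z = 0" and zm: "z$m = 0"
    and zk: "z$k = 0" and am: "a$m \<noteq> 0" and ak: "a$k \<noteq> 0" and km: "k \<noteq> m"
  shows "\<not> local_min_on (sphere 0 1) (fobj a b) z"
proof (rule not_lmin_by)
  fix e :: real assume e: "e > 0"
  define Q where "Q = norm4_pow4 z"
  have Q: "Q > 0" using q4_pos[OF nz] Q_def by simp
  define am' where "am' = cmod (a$m)"
  define ak' where "ak' = cmod (a$k)"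
  have am': "am' > 0" using am am'_def by simp
  have ak': "ak' > 0" using ak ak'_def by simp
  define K where "K = ak' + am' + ak'^2 + am'^2 + 1"
  have K: "K \<ge> 1" "K > 0" unfolding K_def using am' ak' by (simp_all add: add_pos_nonneg)
  define d where "d = min (1/2) (min (Q/2) (e/3))"
  have d: "d > 0" "d \<le> 1/2" "d \<le> Q/2" "d \<le> e/3" using Q e unfolding d_def by auto
  define \<epsilon> where "\<epsilon> = d / K"
  have ep: "\<epsilon> > 0" "\<epsilon> \<le> d" "K * \<epsilon> = d" using d K unfolding \<epsilon>_def by (auto simp: field_simps)
  define um where "um = of_real (\<epsilon> * ak' / am') * a$m"
  define uk where "uk = - of_real (\<epsilon> * am' / ak') * a$k"
  have cum: "cnj (a$m) * um = of_real (\<epsilon> * ak' * am')"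
  proof -
    have "cnj (a$m) * um = of_real (\<epsilon> * ak' / am') * (cnj (a$m) * a$m)" unfolding um_def by simp
    also have "\<dots> = of_real (\<epsilon> * ak' / am' * am'^2)" unfolding cnj_mult_self am'_def by simp
    also have "\<dots> = of_real (\<epsilon> * ak' * am')" using am' by (simp add: power2_eq_square)
    finally show ?thesis .
  qed
  have cuk: "cnj (a$k) * uk = - of_real (\<epsilon> * ak' * am')"
  proof -
    have "cnj (a$k) * uk = - of_real (\<epsilon> * am' / ak') * (cnj (a$k) * a$k)" unfolding uk_def by simp
    also have "\<dots> = - of_real (\<epsilon> * am' / ak' * ak'^2)" unfolding cnj_mult_self ak'_def by simp
    also have "\<dots> = - of_real (\<epsilon> * ak' * am')" using ak' by (simp add: power2_eq_square)
    finally show ?thesis .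
  qed
  have num: "cmod um = \<epsilon> * ak'" unfolding um_def using ep am' ak'
    by (simp add: norm_mult norm_divide am'_def)
  have nuk: "cmod uk = \<epsilon> * am'" unfolding uk_def using ep am' ak'
    by (simp add: norm_mult norm_divide ak'_def)
  define w1 where "w1 = upd z m um"
  define w' where "w' = upd w1 k uk"
  have w1k: "w1$k = 0" unfolding w1_def upd_nth using km zk by simp
  have ad: "adj_dot a w' = adj_dot a z" unfolding w'_def w1_def adj_dot_upd c0 zm
    using w1k cum cuk w1_def by simp
  define P where "P = \<epsilon>^2 * (ak'^2 + am'^2)"
  have nw: "(norm w')^2 = 1 + P" unfolding w'_def nsq_upd w1_def nz zm
    using w1k w1_def num nuk unfolding P_def by (simp add: power_mult_distrib algebra_simps)
  have q4: "norm4_pow4 w' \<le> norm4_pow4 z + P^2"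
  proof -
    have "norm4_pow4 w' = norm4_pow4 z + (\<epsilon> * ak')^4 + (\<epsilon> * am')^4"
      unfolding w'_def n4_upd w1_def zm using w1k w1_def num nuk by simp
    also have "\<dots> \<le> norm4_pow4 z + P^2"
    proof -
      have "P^2 = (\<epsilon> * ak')^4 + (\<epsilon> * am')^4 + 2*(\<epsilon>^2*ak'*am')^2"
        unfolding P_def by (simp add: power2_eq_square algebra_simps power4_eq_xxxx)
      then have "(\<epsilon> * ak')^4 + (\<epsilon> * am')^4 \<le> P^2" by simp
      then show ?thesis by simp
    qed
    finally show ?thesis .
  qed
  have Ppos: "P > 0" unfolding P_def using ep ak' by (simp add: add_pos_nonneg)
  have Ple: "P \<le> d"
  proof -
    have "\<epsilon> * (ak'^2 + am'^2) \<le> K * \<epsilon>" unfolding K_def using ep ak' am' by (simp add: algebra_simps)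
    then have "\<epsilon> * (\<epsilon> * (ak'^2 + am'^2)) \<le> 1 * d" using ep d
      by (intro mult_mono) auto
    then show ?thesis unfolding P_def by (simp add: power2_eq_square algebra_simps)
  qed
  have Pq: "P < 2 * norm4_pow4 z" using Ple d Q Q_def by linarith
  have dw: "dist w' z \<le> d"
  proof -
    have "dist w' w1 = \<epsilon> * am'" unfolding w'_def dist_upd using w1k nuk by simp
    moreover have "dist w1 z = \<epsilon> * ak'" unfolding w1_def dist_upd zm using num by simp
    moreover have "\<epsilon> * am' + \<epsilon> * ak' \<le> K * \<epsilon>" unfolding K_def using ep ak' am' by (simp add: algebra_simps)
    ultimately show ?thesis using dist_triangle[of w' z w1] ep by linarith
  qed
  from gd_ex[OF nz b ad nw Ppos q4 Pq]
  obtain w where "norm w = 1" "dist w z \<le> P + dist w' z" "fobj a b w < fobj a b z" by blast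
  moreover have "P + dist w' z < e" using Ple dw d e by linarith
  ultimately show "\<exists>w. norm w = 1 \<and> dist w z < e \<and> fobj a b w < fobj a b z" by force
qed

lemma c0_single:
  fixes z :: "complex^'n"
  assumes nz: "norm z = 1" and b: "b > 0" and c0: "adj_dot a z = 0" and zm: "z$m = 0"
    and small: "(cmod (a$m))^2 < 2 * b * norm4_pow4 z"
  shows "\<not> local_min_on (sphere 0 1) (fobj a b) z"
proof (rule not_lmin_by)
  fix e :: real assume e: "e > 0"
  define Q where "Q = norm4_pow4 z"
  define al where "al = cmod (a$m)"
  define \<delta> where "\<delta> = b * Q - al^2/2"
  have dl: "\<delta> > 0" using small unfolding \<delta>_def al_def Q_def by simp
  define p where "p = min (1/2) (min (e/3) (\<delta> / (al^2 + b + 1)))"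
  have hb: "al^2 + b + 1 > 0" using b zero_le_power2[of al] by linarith
  have p: "p > 0" "p \<le> 1/2" "p \<le> e/3" "p \<le> \<delta> / (al^2 + b + 1)"
    unfolding p_def using dl e hb
    apply simp
    apply (rule min.cobounded1)
    apply (rule min.coboundedI2[OF min.cobounded1])
    apply (rule min.coboundedI2[OF min.cobounded2])
    done
  define P where "P = p^2"
  have pp: "P \<le> p" unfolding P_def using p by (simp add: power2_eq_square mult_left_le)
  have Ppos: "P > 0" unfolding P_def using p by simp
  define w' where "w' = upd z m (of_real p)"
  have ad: "adj_dot a w' = cnj (a$m) * of_real p" unfolding w'_def adj_dot_upd c0 zm by simp
  have nw: "(norm w')^2 = 1 + P" unfolding w'_def nsq_upd nz zm P_def using p by simp
  have q4: "norm4_pow4 w' = Q + P^2" unfolding w'_def n4_upd zm Q_def P_def using p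
    by (simp add: power_mult[symmetric])
  define N where "N = norm w'"
  have Npos: "N > 0" using nw N_def Ppos by (metis add_pos_pos norm_ge_zero order_le_less zero_less_one power_zero_numeral not_less_iff_gr_or_eq zero_less_power2)
  have N2: "N^2 = 1 + P" using nw N_def by simp
  have N4: "N^4 = (1+P)^2" using N2 by (metis power_mult numeral_Bit0 numeral_One power2_eq_square mult_2 one_add_one)
  define w where "w = (1/N) *\<^sub>R w'"
  have nw1: "norm w = 1" unfolding w_def using Npos N_def by simp
  have fw: "fobj a b w = 1/2 * (al^2 * P) / (1+P) + b/2 * (Q + P^2) / (1+P)^2"
    unfolding fobj_def w_def adj_dot_scaleR n4_scaleR ad q4 N4[symmetric] al_def P_def
    using Npos p N2[symmetric] unfolding P_def
    by (simp add: norm_mult norm_divide power_divide power_mult_distrib field_simps)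
  have fz: "fobj a b z = b/2 * Q" unfolding fobj_def c0 Q_def by simp
  have key: "1/2 * (al^2 * P) * (1+P) + b/2 * (Q + P^2) < b/2 * Q * (1+P)^2"
  proof -
    have hh: "al^2/2 + b/2 < al^2 + b + 1" "0 \<le> al^2/2 + b/2" using b zero_le_power2[of al] by linarith+
    have "P * (al^2/2 + b/2) \<le> p * (al^2/2 + b/2)" using pp hh by (intro mult_right_mono) auto
    also have "\<dots> < p * (al^2 + b + 1)" using p hh by (intro mult_strict_left_mono) auto
    also have "\<dots> \<le> \<delta>" using p hb by (simp add: le_divide_eq)
    finally have h1: "P * (al^2/2 + b/2) < \<delta>" .
    have "b/2 * Q * (1+P)^2 - (1/2 * (al^2 * P) * (1+P) + b/2 * (Q + P^2))
        = P * (\<delta> - P * (al^2/2 + b/2) + P * (b/2 * Q))"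
      unfolding \<delta>_def by (simp add: power2_eq_square algebra_simps diff_divide_distrib add_divide_distrib)
    also have "\<dots> > 0"
    proof -
      have "P * (b/2 * Q) \<ge> 0" using Ppos b unfolding Q_def norm4_pow4_def by (simp add: sum_nonneg)
      then have "\<delta> - P * (al^2/2 + b/2) + P * (b/2 * Q) > 0" using h1 by linarith
      then show ?thesis using Ppos by (rule mult_pos_pos[rotated])
    qed
    finally show ?thesis by simp
  qed
  have "fobj a b w < fobj a b z"
  proof -
    have h: "(1+P)^2 > 0" using Ppos by simp
    have hne: "1 + P \<noteq> 0" using Ppos by simp
    have "fobj a b w * (1+P)^2 = (1/2 * (al^2 * P) / (1+P)) * (1+P)^2 + (b/2 * (Q + P^2) / (1+P)^2) * (1+P)^2"
      unfolding fw by (simp add: distrib_right)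
    also have "(1/2 * (al^2 * P) / (1+P)) * (1+P)^2 = 1/2 * (al^2 * P) * (1+P)"
    proof -
      have gen: "X / (1+P) * (1+P)^2 = X * (1+P)" for X using hne by (simp add: power2_eq_square)
      show ?thesis by (rule gen)
    qed
    also have "(b/2 * (Q + P^2) / (1+P)^2) * (1+P)^2 = b/2 * (Q + P^2)"
      using h by simp
    finally have "fobj a b w * (1+P)^2 = 1/2 * (al^2 * P) * (1+P) + b/2 * (Q + P^2)" .
    also have "\<dots> < fobj a b z * (1+P)^2" unfolding fz using key by simp
    finally show ?thesis using h by simp
  qed
  moreover have "dist w z < e"
  proof -
    have "dist w w' = N - 1"
    proof -
      have N1: "N \<ge> 1" using N2 Ppos Npos by (metis abs_of_nonneg less_eq_real_def le_add_same_cancel1 one_le_power power2_le_imp_le one_power2 zero_le_one)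
      have "w' - w = (1 - 1/N) *\<^sub>R w'" unfolding w_def by (simp add: algebra_simps)
      moreover have "1/N \<le> 1" using N1 by simp
      ultimately have "norm (w' - w) = (1 - 1/N) * N" using N1 N_def by simp
      also have "\<dots> = N - 1" using Npos by (simp add: field_simps)
      finally show ?thesis by (simp add: dist_norm norm_minus_commute)
    qed
    moreover have "N - 1 \<le> P"
    proof -
      have N1: "N \<ge> 1" using N2 Ppos Npos by (metis abs_of_nonneg less_eq_real_def le_add_same_cancel1 one_le_power power2_le_imp_le one_power2 zero_le_one)
      have "(N - 1) * 1 \<le> (N - 1) * (N + 1)" using N1 by (intro mult_left_mono) auto
      also have "\<dots> = N^2 - 1" by (simp add: algebra_simps power2_eq_square)
      finally show ?thesis using N2 by simp
    qed
    moreover have "dist w' z = p" unfolding w'_def dist_upd zm using p by simp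
    ultimately have "dist w z \<le> P + p" using dist_triangle[of w z w'] by linarith
    then show ?thesis using pp p by linarith
  qed
  ultimately show "\<exists>w. norm w = 1 \<and> dist w z < e \<and> fobj a b w < fobj a b z" using nw1 by blast
qed



lemma ti_identity:
  fixes c vj vm s :: real
  defines "x \<equiv> s * vm" and "y \<equiv> s * vj"
  shows "(c * ((1+x^2)*(1+y^2)) + vj * (-2*x^2) * (1+y^2) + vm * (-2*y^2) * (1+x^2))^2
       + (vj * (2*x) * (1+y^2) + vm * (2*(-y)) * (1+x^2))^2
       - c^2 * ((1+x^2)*(1+y^2))^2
     = 4 * s^2 * vj * vm * (vj+vm) * (- c + (vj + vm - c) * s^2 * vj * vm) * ((1+x^2)*(1+y^2))"
  unfolding x_def y_def by (simp add: power2_eq_square algebra_simps)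

lemma two_index:
  fixes z :: "complex^'n"
  assumes nz: "norm z = 1" and b: "b > 0" and jm: "j \<noteq> m"
    and vjd: "cnj (a$j) * z$j = of_real vj" and vmd: "cnj (a$m) * z$m = of_real vm"
    and cd: "adj_dot a z = of_real c" and vj: "vj > 0" and vm: "vm > 0" and c: "c > 0"
  shows "\<not> local_min_on (sphere 0 1) (fobj a b) z"
proof (rule not_lmin_by)
  fix e :: real assume e: "e > 0"
  define V where "V = vj + vm"
  have V: "V > 0" using vj vm V_def by simp
  define G where "G = \<bar>V - c\<bar> * vj * vm + 1"
  have G: "G \<ge> 1" unfolding G_def using vj vm by simp
  define s where "s = min (1/2) (min (e/(4*V)) (c/(2*G)))"
  have s: "s > 0" "s \<le> 1/2" "s \<le> e/(4*V)" "s \<le> c/(2*G)"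
    unfolding s_def using e V c G
    apply simp
    apply (rule min.cobounded1)
    apply (rule min.coboundedI2[OF min.cobounded1])
    apply (rule min.coboundedI2[OF min.cobounded2])
    done
  define x where "x = s * vm"
  define y where "y = s * vj"
  define \<omega>1 where "\<omega>1 = rot x"
  define \<omega>2 where "\<omega>2 = rot (-y)"
  define w1 where "w1 = upd z j (z$j * \<omega>1)"
  define w where "w = upd w1 m (z$m * \<omega>2)"
  have w1m: "w1$m = z$m" unfolding w1_def upd_nth using jm by simp
  have o1: "cmod \<omega>1 = 1" "cmod \<omega>2 = 1" unfolding \<omega>1_def \<omega>2_def by (simp_all add: rot_norm)
  have nw1: "(norm w1)^2 = 1" unfolding w1_def nsq_upd nz using o1 by (simp add: norm_mult)
  have nw: "norm w = 1"
  proof -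
    have "(norm w)^2 = 1" unfolding w_def nsq_upd nw1 w1m using o1 by (simp add: norm_mult)
    then show ?thesis using norm_ge_zero[of w] by (auto simp: power2_eq_1_iff)
  qed
  have q1: "norm4_pow4 w1 = norm4_pow4 z" unfolding w1_def n4_upd using o1 by (simp add: norm_mult)
  have q: "norm4_pow4 w = norm4_pow4 z" unfolding w_def n4_upd q1 w1m using o1 by (simp add: norm_mult)
  have ad: "adj_dot a w = of_real c + of_real vj * (\<omega>1 - 1) + of_real vm * (\<omega>2 - 1)"
  proof -
    have "adj_dot a w = adj_dot a z + cnj (a$j) * z$j * (\<omega>1 - 1) + cnj (a$m) * z$m * (\<omega>2 - 1)"
      unfolding w_def adj_dot_upd w1m unfolding w1_def adj_dot_upd by (simp add: algebra_simps)
    then show ?thesis unfolding cd vjd vmd .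
  qed
  define D1 where "D1 = 1 + x^2"
  define D2 where "D2 = 1 + y^2"
  have D1: "D1 > 0" and D2: "D2 > 0" unfolding D1_def D2_def by (simp_all add: add_pos_nonneg)
  have re: "Re (adj_dot a w) = (c * (D1*D2) + vj * (-2*x^2) * D2 + vm * (-2*y^2) * D1) / (D1*D2)"
  proof -
    have "Re (adj_dot a w) = c + vj * ((1 - x^2)/D1 - 1) + vm * ((1 - y^2)/D2 - 1)"
      unfolding ad \<omega>1_def \<omega>2_def rot_def D1_def D2_def by simp
    also have "\<dots> = (c * (D1*D2) + vj * (-2*x^2) * D2 + vm * (-2*y^2) * D1) / (D1*D2)"
      using D1 D2 unfolding D1_def D2_def by (simp add: field_simps)
    finally show ?thesis .
  qed
  have im: "Im (adj_dot a w) = (vj * (2*x) * D2 + vm * (2*(-y)) * D1) / (D1*D2)"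
  proof -
    have "Im (adj_dot a w) = vj * (2*x/D1) + vm * (2*(-y)/D2)"
      unfolding ad \<omega>1_def \<omega>2_def rot_def D1_def D2_def by simp
    also have "\<dots> = (vj * (2*x) * D2 + vm * (2*(-y)) * D1) / (D1*D2)"
      using D1 D2 by (simp add: field_simps)
    finally show ?thesis .
  qed
  have neg: "- c + (vj + vm - c) * s^2 * vj * vm < 0"
  proof -
    have k: "s^2 * vj * vm \<ge> 0" using vj vm by simp
    have "(vj + vm - c) * (s^2 * vj * vm) \<le> \<bar>V - c\<bar> * (s^2 * vj * vm)" using k unfolding V_def
      by (intro mult_right_mono) auto
    then have "(vj + vm - c) * s^2 * vj * vm \<le> \<bar>V - c\<bar> * vj * vm * s^2"
      by (simp add: algebra_simps)
    also have "\<dots> \<le> \<bar>V - c\<bar> * vj * vm * s"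
      using s vj vm by (intro mult_left_mono) (auto simp: power2_eq_square mult_left_le)
    also have "\<dots> \<le> G * s" unfolding G_def using s by (simp add: algebra_simps)
    also have "\<dots> \<le> c / 2" using s G by (simp add: le_divide_eq algebra_simps)
    finally show ?thesis using c by linarith
  qed
  have cm: "(cmod (adj_dot a w))^2 < c^2"
  proof -
    have "(cmod (adj_dot a w))^2 = (Re (adj_dot a w))^2 + (Im (adj_dot a w))^2"
      by (simp add: cmod_power2)
    also have "\<dots> = ((c * (D1*D2) + vj * (-2*x^2) * D2 + vm * (-2*y^2) * D1)^2
       + (vj * (2*x) * D2 + vm * (2*(-y)) * D1)^2) / (D1*D2)^2"
      unfolding re im by (simp add: power_divide add_divide_distrib)
    also have "\<dots> = (c^2 * (D1*D2)^2 + 4 * s^2 * vj * vm * (vj+vm) * (- c + (vj + vm - c) * s^2 * vj * vm) * (D1*D2)) / (D1*D2)^2"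
      using ti_identity[of c s vm vj] unfolding D1_def D2_def x_def y_def by (simp add: algebra_simps)
    also have "\<dots> < c^2 * (D1*D2)^2 / (D1*D2)^2"
    proof -
      have "4 * s^2 * vj * vm * (vj+vm) * (- c + (vj + vm - c) * s^2 * vj * vm) * (D1*D2) < 0"
        using s vj vm D1 D2 neg by (simp add: mult_pos_neg mult_neg_pos)
      then have "c^2 * (D1*D2)^2 + 4 * s^2 * vj * vm * (vj+vm) * (- c + (vj + vm - c) * s^2 * vj * vm) * (D1*D2) < c^2 * (D1*D2)^2"
        by linarith
      moreover have "(D1*D2)^2 > 0" using D1 D2 by simp
      ultimately show ?thesis by (rule divide_strict_right_mono)
    qed
    also have "\<dots> = c^2" using D1 D2 by simp
    finally show ?thesis .
  qed
  have "fobj a b w < fobj a b z"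
    unfolding fobj_def q cd using cm by simp
  moreover have "dist w z < e"
  proof -
    have "dist w w1 = cmod (z$m) * cmod (\<omega>2 - 1)" unfolding w_def dist_upd w1m
      by (simp add: norm_mult[symmetric] algebra_simps)
    also have "\<dots> \<le> 1 * (2 * y)" unfolding \<omega>2_def
      using comp_le1[OF nz, of m] rot_m1_le[of "-y"] s vj y_def by (intro mult_mono) auto
    finally have d1: "dist w w1 \<le> 2 * y" by simp
    have "dist w1 z = cmod (z$j) * cmod (\<omega>1 - 1)" unfolding w1_def dist_upd
      by (simp add: norm_mult[symmetric] algebra_simps)
    also have "\<dots> \<le> 1 * (2 * x)" unfolding \<omega>1_def
      using comp_le1[OF nz, of j] rot_m1_le[of "x"] s vm x_def by (intro mult_mono) auto
    finally have d2: "dist w1 z \<le> 2 * x" by simp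
    have "2*x + 2*y = 2 * s * V" unfolding x_def y_def V_def by (simp add: algebra_simps)
    also have "\<dots> \<le> 2 * (e/(4*V)) * V" using s V by (intro mult_right_mono) auto
    also have "\<dots> = e/2" using V by simp
    finally show ?thesis using d1 d2 dist_triangle[of w z w1] e by linarith
  qed
  ultimately show "\<exists>w. norm w = 1 \<and> dist w z < e \<and> fobj a b w < fobj a b z" using nw by blast
qed



lemma wcs:
  fixes al rho r :: "'i \<Rightarrow> real"
  assumes "\<And>i. i \<in> I \<Longrightarrow> al i \<ge> 0 \<and> rho i > 0"
  shows "(\<Sum>i\<in>I. al i * r i)^2 \<le> (\<Sum>i\<in>I. al i * rho i) * (\<Sum>i\<in>I. al i / rho i * (r i)^2)"
proof -
  define f where "f i = sqrt (al i * rho i)" for i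
  define g where "g i = sqrt (al i / rho i) * r i" for i
  have fg: "f i * g i = al i * r i" if "i \<in> I" for i
  proof -
    have "f i * g i = (sqrt (al i * rho i) * sqrt (al i / rho i)) * r i"
      unfolding f_def g_def by simp
    also have "sqrt (al i * rho i) * sqrt (al i / rho i) = sqrt (al i * rho i * (al i / rho i))"
      by (rule real_sqrt_mult[symmetric])
    also have "al i * rho i * (al i / rho i) = (al i)^2" using assms[OF that] by (simp add: power2_eq_square)
    finally show ?thesis using assms[OF that] by simp
  qed
  have f2: "(f i)^2 = al i * rho i" if "i \<in> I" for i
    unfolding f_def using assms[OF that] by simp
  have g2: "(g i)^2 = al i / rho i * (r i)^2" if "i \<in> I" for i
    unfolding g_def using assms[OF that] by (simp add: power_mult_distrib)
  have "(\<Sum>i\<in>I. f i * g i)^2 \<le> (\<Sum>i\<in>I. (f i)^2) * (\<Sum>i\<in>I. (g i)^2)"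
    by (rule Cauchy_Schwarz_ineq_sum)
  moreover have "(\<Sum>i\<in>I. f i * g i) = (\<Sum>i\<in>I. al i * r i)" using fg by (rule sum.cong[OF refl])
  moreover have "(\<Sum>i\<in>I. (f i)^2) = (\<Sum>i\<in>I. al i * rho i)" using f2 by (rule sum.cong[OF refl])
  moreover have "(\<Sum>i\<in>I. (g i)^2) = (\<Sum>i\<in>I. al i / rho i * (r i)^2)" using g2 by (rule sum.cong[OF refl])
  ultimately show ?thesis by simp
qed

lemma key_real:
  fixes al c rm Bs gm t B Gm :: real
  assumes al: "al > 0" and c: "c > 0" and rm: "rm > 0" and Bs: "Bs \<ge> 0"
    and hB: "al * rm = c + Bs" and hg: "2 * rm * gm = c * al"
    and t: "t \<ge> 0" and B: "B \<ge> 0" and Gm: "Gm \<ge> 0" and cs: "B^2 \<le> Bs * Gm"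
  shows "1/2 * (max 0 (al * t - B))^2 \<ge> gm * t^2 - c/2 * Gm"
proof (cases "Bs = 0")
  case True
  then have "B = 0" using cs by simp
  have "rm * (2 * gm) = rm * al^2" using hg hB True by (simp add: power2_eq_square algebra_simps)
  then have "gm = al^2/2" using rm by simp
  then have "1/2 * (max 0 (al * t - B))^2 = gm * t^2" using \<open>B = 0\<close> al t
    by (simp add: power_mult_distrib max_def)
  then show ?thesis using c Gm by simp
next
  case False
  then have Bsp: "Bs > 0" using Bs by simp
  have gm: "gm = c * al / (2 * rm)"
  proof -
    have "gm = (2 * rm * gm) / (2 * rm)" using rm by simp
    then show ?thesis unfolding hg .
  qed
  have cG: "c/2 * Gm \<ge> c * B^2 / (2 * Bs)"
  proof -
    have "B^2 / Bs \<le> Gm" using cs Bsp by (simp add: divide_le_eq mult.commute)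
    then have "c/2 * (B^2 / Bs) \<le> c/2 * Gm" using c by (intro mult_left_mono) auto
    then show ?thesis by simp
  qed
  have main: "rm * Bs * (max 0 (al * t - B))^2 - c * al * Bs * t^2 + c * rm * B^2 \<ge> 0"
  proof (cases "al * t \<ge> B")
    case True
    have "rm * Bs * (max 0 (al * t - B))^2 - c * al * Bs * t^2 + c * rm * B^2
        = rm * Bs * (al * t - B)^2 - c * al * Bs * t^2 + c * rm * B^2" using True by simp
    also have "\<dots> = al * (Bs * t - rm * B)^2"
    proof -
      have cc: "c = al * rm - Bs" using hB by simp
      show ?thesis by (simp only: cc) (simp add: power2_eq_square algebra_simps)
    qed
    finally show ?thesis using al by simp
  next
    case False
    have "al * Bs * t^2 \<le> rm * B^2"
    proof -
      have "(al * t)^2 \<le> B^2" using False t al B by (intro power_mono) auto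
      then have "Bs * (al * t)^2 \<le> Bs * B^2" using Bsp by (intro mult_left_mono) auto
      then have "al * (Bs * t^2) * al \<le> Bs * B^2" by (simp add: power_mult_distrib algebra_simps power2_eq_square)
      moreover have "Bs * B^2 \<le> al * rm * B^2" using hB c by (intro mult_right_mono) auto
      ultimately have "al * (al * Bs * t^2) \<le> al * (rm * B^2)" by (simp add: algebra_simps)
      then show ?thesis using al by simp
    qed
    then have "c * (al * Bs * t^2) \<le> c * (rm * B^2)" using c by (intro mult_left_mono) auto
    then show ?thesis using False by (simp add: algebra_simps)
  qed
  have "gm * t^2 - c * B^2 / (2 * Bs) \<le> 1/2 * (max 0 (al * t - B))^2"
  proof -
    have h: "2 * rm * Bs > 0" using rm Bsp by simp
    have "(gm * t^2 - c * B^2 / (2 * Bs)) * (2 * rm * Bs) = c * al * Bs * t^2 - c * rm * B^2"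
      unfolding gm using rm Bsp by (simp add: field_simps)
    also have "\<dots> \<le> rm * Bs * (max 0 (al * t - B))^2" using main by simp
    also have "\<dots> = (1/2 * (max 0 (al * t - B))^2) * (2 * rm * Bs)" by simp
    finally show ?thesis using h by (simp only: mult_le_cancel_right_pos)
  qed
  then show ?thesis using cG by linarith
qed



lemma main_pos:
  fixes a z :: "complex^'n" and b :: real
  assumes b: "b > 0" and hinf: "norm_inf a > norm1 a / 2"
    and lm: "local_min_on (sphere 0 1) (fobj a b) z" and cons: "consistent_pt a b z"
    and cpos: "Re (adj_dot a z) > 0"
  shows "global_min_on (sphere 0 1) (fobj a b) z"
proof -
  have st: "stationary_pt a b z" using cons unfolding consistent_pt_def by blast
  have nz: "norm z = 1" using st unfolding stationary_pt_def by blast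
  define Q where "Q = norm4_pow4 z"
  define al where "al k = cmod (a$k)" for k
  define rho where "rho k = cmod (z$k)" for k
  define v where "v k = Re (cnj (a$k) * z$k)" for k
  have vreal: "cnj (a$k) * z$k = of_real (v k)" for k
  proof (cases "a$k = 0")
    case True then show ?thesis by (simp add: v_def)
  next
    case False then have "cnj (a$k) * z$k \<in> \<real>" using cons unfolding consistent_pt_def by blast
    then show ?thesis unfolding v_def by (metis of_real_Re)
  qed
  define c where "c = (\<Sum>k\<in>UNIV. v k)"
  have cd: "adj_dot a z = of_real c" unfolding adj_dot_def c_def using vreal by (simp add: of_real_sum)
  have c: "c > 0" using cpos cd by simp
  have av: "\<bar>v k\<bar> = al k * rho k" for k
  proof -
    have "cmod (cnj (a$k) * z$k) = al k * rho k" unfolding al_def rho_def by (simp add: norm_mult)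
    then show ?thesis unfolding vreal by simp
  qed
  have al0: "al k \<ge> 0" for k unfolding al_def by simp
  have rho0: "rho k \<ge> 0" for k unfolding rho_def by simp
  define L where "L = c^2 + 2*b*Q"
  have stk: "adj_dot a z * a$k + of_real (2*b*(rho k)^2) * z$k = of_real L * z$k" for k
    using st unfolding stationary_pt_def L_def Q_def rho_def cd by simp
  have F3: "c * (al k)^2 + 2*b*(rho k)^2 * v k = L * v k" for k
  proof -
    have "cnj (a$k) * (adj_dot a z * a$k + of_real (2*b*(rho k)^2) * z$k) = cnj (a$k) * (of_real L * z$k)"
      using stk by simp
    then have "of_real c * (cnj (a$k) * a$k) + of_real (2*b*(rho k)^2) * (cnj (a$k) * z$k) = of_real L * (cnj (a$k) * z$k)"
      unfolding cd by (simp add: algebra_simps)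
    then have "of_real (c * (al k)^2 + 2*b*(rho k)^2 * v k) = (of_real (L * v k) :: complex)"
      unfolding cnj_mult_self vreal al_def by simp
    then show ?thesis by (simp only: of_real_eq_iff)
  qed
  have F4: "z$k \<noteq> 0" if "a$k = 0" for k using zero_coord[OF nz b that] lm by blast
  have F5: "2*b*(rho k)^2 = L" if ak: "a$k = 0" for k
  proof -
    have "of_real (2*b*(rho k)^2) * z$k = of_real L * z$k" using stk[of k] ak by simp
    then have "of_real (2*b*(rho k)^2) = (of_real L :: complex)" using F4[OF ak] by simp
    then show ?thesis by (simp only: of_real_eq_iff)
  qed
  obtain m where m: "al m = norm_inf a" and mmax: "\<forall>k. al k \<le> al m"
  proof -
    have "norm_inf a \<in> range al" unfolding norm_inf_def al_def by (rule Max_in) auto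
    then obtain m where "al m = norm_inf a" by auto
    moreover have "\<forall>k. al k \<le> norm_inf a" unfolding norm_inf_def al_def by (auto intro: Max_ge)
    ultimately show ?thesis using that by auto
  qed
  have split: "(\<Sum>k\<in>UNIV. f k) = f m + (\<Sum>k\<in>UNIV-{m}. f k)" for f :: "'n \<Rightarrow> real"
    by (simp add: sum.remove)
  define S where "S = (\<Sum>k\<in>UNIV-{m}. al k)"
  have S0: "S \<ge> 0" unfolding S_def using al0 by (simp add: sum_nonneg)
  have n1: "norm1 a = al m + S" unfolding norm1_def S_def al_def using split[of "\<lambda>k. cmod (a$k)"] by simp
  have dom: "al m > S" using hinf m n1 by simp
  have alm: "al m > 0" using dom S0 by simp
  have csum: "c = v m + (\<Sum>k\<in>UNIV-{m}. v k)" unfolding c_def by (rule split)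
  have F6: "v m > 0"
  proof -
    have "v m \<noteq> 0"
    proof
      assume "v m = 0"
      then have "c * (al m)^2 = 0" using F3[of m] by simp
      then show False using c alm by simp
    qed
    moreover have "\<not> v m < 0"
    proof
      assume vm: "v m < 0"
      have rm: "rho m > 0" using av[of m] vm alm rho0[of m] by (cases "rho m = 0") auto
      have "c * (al m)^2 > 0" using c alm by simp
      then have "(L - 2*b*(rho m)^2) * v m > 0" using F3[of m] by (simp add: algebra_simps)
      then have Lm: "L - 2*b*(rho m)^2 < 0" using vm by (simp add: zero_less_mult_iff)
      have vk: "v k \<le> al k * rho m" if "k \<in> UNIV - {m}" for k
      proof (cases "v k > 0")
        case False then show ?thesis using al0[of k] rm by (simp add: not_less order_trans[OF _ mult_nonneg_nonneg])
      next
        case True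
        have vk1: "v k = al k * rho k" using av[of k] True by simp
        have "c * (al k)^2 \<ge> 0" using c by simp
        then have "(L - 2*b*(rho k)^2) * v k \<ge> 0" using F3[of k] by (simp add: algebra_simps)
        then have "L - 2*b*(rho k)^2 \<ge> 0" using True by (simp add: zero_le_mult_iff)
        then have "2*b*(rho k)^2 < 2*b*(rho m)^2" using Lm by simp
        then have "(rho k)^2 < (rho m)^2" using b by simp
        then have "rho k < rho m" using rho0[of m] by (simp add: power_less_imp_less_base)
        then show ?thesis unfolding vk1 using al0[of k] by (simp add: mult_left_mono)
      qed
      have "(\<Sum>k\<in>UNIV-{m}. v k) \<le> (\<Sum>k\<in>UNIV-{m}. al k * rho m)" using vk by (rule sum_mono)
      also have "\<dots> = S * rho m" unfolding S_def by (simp add: sum_distrib_right)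
      finally have "c \<le> v m + S * rho m" using csum by simp
      moreover have "v m = - (al m * rho m)" using av[of m] vm by simp
      moreover have "S * rho m < al m * rho m" using dom rm by simp
      ultimately show False using c by linarith
    qed
    ultimately show ?thesis by simp
  qed
  have F7: "v j \<le> 0" if "j \<noteq> m" for j
  proof (rule ccontr)
    assume "\<not> v j \<le> 0"
    then have "v j > 0" by simp
    from two_index[OF nz b that vreal vreal cd this F6 c] lm show False by blast
  qed
  define g where "g k = L/2 - b*(rho k)^2" for k
  have F8: "rho k > 0 \<and> 2 * rho k * g k = - c * al k \<and> v k = - (al k * rho k)" if km: "k \<noteq> m" for k
  proof (cases "a$k = 0")
    case True
    have "rho k > 0" using F4[OF True] unfolding rho_def by simp
    moreover have "g k = 0" using F5[OF True] unfolding g_def by simp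
    moreover have "al k = 0" using True unfolding al_def by simp
    moreover have "v k = 0" using av[of k] \<open>al k = 0\<close> by simp
    ultimately show ?thesis by simp
  next
    case False
    have alk: "al k > 0" using False unfolding al_def by simp
    have "v k \<noteq> 0"
    proof
      assume "v k = 0"
      then have "c * (al k)^2 = 0" using F3[of k] by simp
      then show False using c alk by simp
    qed
    then have vk: "v k < 0" using F7[OF km] by simp
    have vk1: "v k = - (al k * rho k)" using av[of k] vk by simp
    have rk: "rho k > 0" using vk vk1 alk rho0[of k] by (cases "rho k = 0") auto
    have "c * (al k)^2 = (L - 2*b*(rho k)^2) * (- (al k * rho k))" using F3[of k] vk1 by (simp add: algebra_simps)
    then have "al k * (c * al k + 2 * rho k * g k) = 0" unfolding g_def by (simp add: algebra_simps power2_eq_square)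
    then have "c * al k = - 2 * rho k * g k" using alk by simp
    then show ?thesis using rk vk1 by simp
  qed
  have F9: "v m = al m * rho m \<and> rho m > 0 \<and> 2 * rho m * g m = c * al m"
  proof -
    have vm1: "v m = al m * rho m" using av[of m] F6 by simp
    have rm: "rho m > 0" using F6 vm1 alm rho0[of m] by (cases "rho m = 0") auto
    have "c * (al m)^2 = (L - 2*b*(rho m)^2) * (al m * rho m)" using F3[of m] vm1 by (simp add: algebra_simps)
    then have "al m * (c * al m) = al m * (2 * rho m * g m)" unfolding g_def by (simp add: algebra_simps power2_eq_square)
    then have "c * al m = 2 * rho m * g m" using alm by simp
    then show ?thesis using rm vm1 by simp
  qed
  define Bs where "Bs = (\<Sum>k\<in>UNIV-{m}. al k * rho k)"
  have Bs0: "Bs \<ge> 0" unfolding Bs_def using al0 rho0 by (simp add: sum_nonneg)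
  have F10: "al m * rho m = c + Bs"
  proof -
    have "(\<Sum>k\<in>UNIV-{m}. v k) = (\<Sum>k\<in>UNIV-{m}. - (al k * rho k))" using F8 by (intro sum.cong) auto
    then have "(\<Sum>k\<in>UNIV-{m}. v k) = - Bs" unfolding Bs_def by (simp add: sum_negf)
    then show ?thesis using csum F9 by simp
  qed
  have fz: "fobj a b z = c^2/2 + b/2 * Q" unfolding fobj_def cd Q_def by simp
  have Qs: "Q = (\<Sum>k\<in>UNIV. (rho k)^4)" unfolding Q_def norm4_pow4_def rho_def ..
  have gsum_id: "g k + b * (rho k)^2 = L/2" for k unfolding g_def by simp
  show ?thesis unfolding global_min_on_def
  proof (intro conjI ballI)
    show "z \<in> sphere 0 1" using nz by simp
  next
    fix w :: "complex^'n" assume "w \<in> sphere 0 1"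
    then have nw: "norm w = 1" by simp
    define r where "r k = cmod (w$k)" for k
    have r0: "r k \<ge> 0" for k unfolding r_def by simp
    define t where "t = r m"
    define B where "B = (\<Sum>k\<in>UNIV-{m}. al k * r k)"
    have B0: "B \<ge> 0" unfolding B_def using al0 r0 by (simp add: sum_nonneg)
    have G1: "cmod (adj_dot a w) \<ge> al m * t - B"
    proof -
      have eq: "adj_dot a w = cnj (a$m) * w$m + (\<Sum>k\<in>UNIV-{m}. cnj (a$k) * w$k)"
        unfolding adj_dot_def by (simp add: sum.remove)
      have "cmod (\<Sum>k\<in>UNIV-{m}. cnj (a$k) * w$k) \<le> B"
        unfolding B_def al_def r_def
        by (rule order_trans[OF norm_sum]) (simp add: norm_mult)
      moreover have "cmod (cnj (a$m) * w$m) = al m * t" unfolding al_def t_def r_def by (simp add: norm_mult)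
      ultimately show ?thesis unfolding eq using norm_diff_ineq[of "cnj (a$m) * w$m" "\<Sum>k\<in>UNIV-{m}. cnj (a$k) * w$k"]
        by linarith
    qed
    have G2: "1/2 * (max 0 (al m * t - B))^2 \<le> 1/2 * (cmod (adj_dot a w))^2"
      using G1 by (simp add: power_mono)
    define Gm where "Gm = (\<Sum>k\<in>UNIV-{m}. al k / rho k * (r k)^2)"
    have Gm0: "Gm \<ge> 0" unfolding Gm_def using al0 rho0 r0 by (simp add: sum_nonneg)
    have CS: "B^2 \<le> Bs * Gm" unfolding B_def Bs_def Gm_def
      by (rule wcs) (use al0 F8 in auto)
    have KEY: "1/2 * (max 0 (al m * t - B))^2 \<ge> g m * t^2 - c/2 * Gm"
      by (rule key_real[OF alm c _ Bs0 F10 _ _ B0 Gm0 CS]) (use F9 t_def r0 in auto)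
    have gs: "(\<Sum>k\<in>UNIV-{m}. g k * (r k)^2) = - c/2 * Gm"
    proof -
      have "(\<Sum>k\<in>UNIV-{m}. g k * (r k)^2) = (\<Sum>k\<in>UNIV-{m}. - c/2 * (al k / rho k * (r k)^2))"
      proof (rule sum.cong[OF refl])
        fix k assume "k \<in> UNIV - {m}"
        then have "rho k > 0" "2 * rho k * g k = - c * al k" using F8 by auto
        then have "g k = - c * al k / (2 * rho k)" by (simp add: field_simps)
        then show "g k * (r k)^2 = - c/2 * (al k / rho k * (r k)^2)" by simp
      qed
      then show ?thesis unfolding Gm_def by (simp add: sum_distrib_left)
    qed
    have H1: "1/2 * (cmod (adj_dot a w))^2 \<ge> (\<Sum>k\<in>UNIV. g k * (r k)^2)"
    proof -
      have "(\<Sum>k\<in>UNIV. g k * (r k)^2) = g m * t^2 + (\<Sum>k\<in>UNIV-{m}. g k * (r k)^2)"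
        using split[of "\<lambda>k. g k * (r k)^2"] t_def by simp
      then show ?thesis using G2 KEY gs by linarith
    qed
    have H2: "b/2 * (r k)^4 \<ge> b * (rho k)^2 * (r k)^2 - b/2 * (rho k)^4" for k
    proof -
      have "b/2 * (r k)^4 - (b * (rho k)^2 * (r k)^2 - b/2 * (rho k)^4) = b/2 * ((r k)^2 - (rho k)^2)^2"
        by (simp add: power2_eq_square power4_eq_xxxx algebra_simps)
      moreover have "b/2 * ((r k)^2 - (rho k)^2)^2 \<ge> 0" using b by simp
      ultimately show ?thesis by linarith
    qed
    have fw: "fobj a b w = 1/2 * (cmod (adj_dot a w))^2 + (\<Sum>k\<in>UNIV. b/2 * (r k)^4)"
      unfolding fobj_def norm4_pow4_def r_def by (simp add: sum_distrib_left)
    have rs: "(\<Sum>k\<in>UNIV. (r k)^2) = 1" using norm_sq_vec[of w] nw unfolding r_def by simp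
    have "fobj a b w \<ge> (\<Sum>k\<in>UNIV. g k * (r k)^2) + (\<Sum>k\<in>UNIV. b * (rho k)^2 * (r k)^2 - b/2 * (rho k)^4)"
      unfolding fw using H1 sum_mono[of UNIV "\<lambda>k. b * (rho k)^2 * (r k)^2 - b/2 * (rho k)^4" "\<lambda>k. b/2 * (r k)^4"] H2
      by simp
    also have "(\<Sum>k\<in>UNIV. g k * (r k)^2) + (\<Sum>k\<in>UNIV. b * (rho k)^2 * (r k)^2 - b/2 * (rho k)^4)
        = (\<Sum>k\<in>UNIV. (g k + b * (rho k)^2) * (r k)^2) - b/2 * (\<Sum>k\<in>UNIV. (rho k)^4)"
      by (simp add: sum.distrib sum_subtractf sum_distrib_left algebra_simps)
    also have "\<dots> = L/2 - b/2 * Q"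
    proof -
      have "(\<Sum>k\<in>UNIV. (g k + b * (rho k)^2) * (r k)^2) = (\<Sum>k\<in>UNIV. L/2 * (r k)^2)"
        unfolding gsum_id ..
      also have "\<dots> = L/2 * (\<Sum>k\<in>UNIV. (r k)^2)" by (rule sum_distrib_left[symmetric])
      finally show ?thesis unfolding rs Qs by simp
    qed
    also have "\<dots> = fobj a b z" unfolding fz L_def by simp
    finally show "fobj a b z \<le> fobj a b w" .
  qed
qed



lemma neg_local_min:
  assumes "local_min_on (sphere 0 1) (fobj a b) (z::complex^'n)"
  shows "local_min_on (sphere 0 1) (fobj a b) (- z)"
proof -
  from assms obtain e where z: "z \<in> sphere 0 1" and e: "e > 0"
    and h: "\<forall>w\<in>sphere 0 1. dist w z < e \<longrightarrow> fobj a b z \<le> fobj a b w"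
    unfolding local_min_on_def by blast
  have "\<forall>w\<in>sphere 0 1. dist w (- z) < e \<longrightarrow> fobj a b (- z) \<le> fobj a b w"
  proof (intro ballI impI)
    fix w :: "complex^'n" assume w: "w \<in> sphere 0 1" and d: "dist w (- z) < e"
    have "- w \<in> sphere 0 1" using w by simp
    moreover have "dist (- w) z < e" using d by (simp add: dist_norm norm_minus_commute add.commute)
    ultimately have "fobj a b z \<le> fobj a b (- w)" using h by blast
    then show "fobj a b (- z) \<le> fobj a b w" by (simp add: fobj_uminus)
  qed
  then show ?thesis unfolding local_min_on_def using z e by auto
qed

lemma neg_consistent:
  assumes "consistent_pt a b (z::complex^'n)"
  shows "consistent_pt a b (- z)"
proof -
  have st: "stationary_pt a b z" using assms unfolding consistent_pt_def by blast
  have "stationary_pt a b (- z)"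
    using st unfolding stationary_pt_def adj_dot_uminus n4_uminus
    by (auto simp: algebra_simps)
  moreover have "(\<forall>k. (a$k \<noteq> 0 \<longrightarrow> cnj (a$k) * (- z)$k \<in> \<real>) \<and> (a$k = 0 \<longrightarrow> (- z)$k \<in> \<real>))"
    using assms unfolding consistent_pt_def by (auto simp: Reals_minus_iff)
  ultimately show ?thesis unfolding consistent_pt_def by blast
qed



lemma c_zero_impossible:
  fixes a z :: "complex^'n" and b :: real
  assumes n2: "CARD('n) \<ge> 2" and b: "b > 0"
    and hinf: "norm_inf a > norm1 a / 2"
    and hs: "\<not> (card {k. a$k \<noteq> 0} = 1 \<and> (norm a)^2 \<ge> 2 * b / (real CARD('n) - 1))"
    and lm: "local_min_on (sphere 0 1) (fobj a b) z"
    and st: "stationary_pt a b z"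
    and c0: "adj_dot a z = 0"
  shows False
proof -
  have nz: "norm z = 1" using st unfolding stationary_pt_def by blast
  define Q where "Q = norm4_pow4 z"
  define al where "al k = cmod (a$k)" for k
  define rho where "rho k = cmod (z$k)" for k
  have al0: "al k \<ge> 0" for k unfolding al_def by simp
  have rho0: "rho k \<ge> 0" for k unfolding rho_def by simp
  have stk: "of_real (2*b*(rho k)^2) * z$k = of_real (2*b*Q) * z$k" for k
    using st unfolding stationary_pt_def Q_def rho_def c0 by simp
  have rk: "rho k = 0 \<or> (rho k)^2 = Q" for k
  proof (cases "z$k = 0")
    case True then show ?thesis unfolding rho_def by simp
  next
    case False
    then have "of_real (2*b*(rho k)^2) = (of_real (2*b*Q) :: complex)" using stk[of k] by simp
    then have "2*b*(rho k)^2 = 2*b*Q" by (simp only: of_real_eq_iff)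
    then show ?thesis using b by simp
  qed
  obtain m where m: "al m = norm_inf a"
  proof -
    have "norm_inf a \<in> range al" unfolding norm_inf_def al_def by (rule Max_in) auto
    then show ?thesis using that by auto
  qed
  have split: "(\<Sum>k\<in>UNIV. f k) = f m + (\<Sum>k\<in>UNIV-{m}. f k)" for f :: "'n \<Rightarrow> real"
    by (simp add: sum.remove)
  define S where "S = (\<Sum>k\<in>UNIV-{m}. al k)"
  have S0: "S \<ge> 0" unfolding S_def using al0 by (simp add: sum_nonneg)
  have n1: "norm1 a = al m + S" unfolding norm1_def S_def al_def using split[of "\<lambda>k. cmod (a$k)"] by simp
  have dom: "al m > S" using hinf m n1 by simp
  have alm: "al m > 0" using dom S0 by simp
  have am: "a$m \<noteq> 0" using alm unfolding al_def by auto
  have zm: "z$m = 0"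
  proof (rule ccontr)
    assume zm: "z$m \<noteq> 0"
    then have rm: "rho m > 0" unfolding rho_def by simp
    then have rmQ: "(rho m)^2 = Q" using rk[of m] by auto
    have rle: "rho k \<le> rho m" for k
      using rk[of k] rmQ rho0[of k] rho0[of m] by (metis order_refl power2_eq_iff_nonneg)
    have eq: "adj_dot a z = cnj (a$m) * z$m + (\<Sum>k\<in>UNIV-{m}. cnj (a$k) * z$k)"
      unfolding adj_dot_def by (simp add: sum.remove)
    have "cmod (\<Sum>k\<in>UNIV-{m}. cnj (a$k) * z$k) \<le> (\<Sum>k\<in>UNIV-{m}. al k * rho k)"
      unfolding al_def rho_def by (rule order_trans[OF norm_sum]) (simp add: norm_mult)
    also have "\<dots> \<le> (\<Sum>k\<in>UNIV-{m}. al k * rho m)"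
      using rle al0 by (intro sum_mono mult_left_mono) auto
    also have "\<dots> = S * rho m" unfolding S_def by (simp add: sum_distrib_right)
    also have "\<dots> < al m * rho m" using dom rm by simp
    also have "\<dots> = cmod (cnj (a$m) * z$m)" unfolding al_def rho_def by (simp add: norm_mult)
    finally have "cmod (\<Sum>k\<in>UNIV-{m}. cnj (a$k) * z$k) < cmod (cnj (a$m) * z$m)" .
    moreover have "cnj (a$m) * z$m = - (\<Sum>k\<in>UNIV-{m}. cnj (a$k) * z$k)"
      using c0 eq by (simp add: eq_neg_iff_add_eq_0)
    ultimately show False by simp
  qed
  show False
  proof (cases "\<exists>k. k \<noteq> m \<and> cnj (a$k) * z$k \<noteq> 0")
    case True
    then obtain k where "k \<noteq> m" "cnj (a$k) * z$k \<noteq> 0" by blast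
    from c0_rot[OF nz b c0 zm am this] lm show False by blast
  next
    case False
    note F = this
    show False
    proof (cases "\<exists>k. k \<noteq> m \<and> a$k \<noteq> 0")
      case True
      then obtain k where k: "k \<noteq> m" "a$k \<noteq> 0" by blast
      then have "z$k = 0" using F by auto
      from c0_two[OF nz b c0 zm this am k(2) k(1)] lm show False by blast
    next
      case False
      then have ak: "a$k = 0" if "k \<noteq> m" for k using that by blast
      have zk: "z$k \<noteq> 0" if "k \<noteq> m" for k using zero_coord[OF nz b ak[OF that]] lm by blast
      have rkQ: "(rho k)^2 = Q" if "k \<noteq> m" for k using rk[of k] zk[OF that] unfolding rho_def by auto
      have "1 = (\<Sum>k\<in>UNIV. (rho k)^2)" using norm_sq_vec[of z] nz unfolding rho_def by simp
      also have "\<dots> = (rho m)^2 + (\<Sum>k\<in>UNIV-{m}. (rho k)^2)" by (rule split)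
      also have "\<dots> = (\<Sum>k\<in>UNIV-{m}. Q)"
      proof -
        have "(\<Sum>k\<in>UNIV-{m}. (rho k)^2) = (\<Sum>k\<in>UNIV-{m}. Q)" by (rule sum.cong) (auto simp: rkQ)
        moreover have "(rho m)^2 = 0" using zm unfolding rho_def by simp
        ultimately show ?thesis by simp
      qed
      also have "\<dots> = (real CARD('n) - 1) * Q" by (simp add: card_Diff_singleton of_nat_diff)
      finally have hQ: "(real CARD('n) - 1) * Q = 1" by simp
      have n1r: "real CARD('n) - 1 > 0" using n2 by simp
      have card1: "card {k. a$k \<noteq> 0} = 1"
      proof -
        have "{k. a$k \<noteq> 0} = {m}" using ak am by auto
        then show ?thesis by simp
      qed
      have na: "(norm a)^2 = (al m)^2"
      proof -
        have "(norm a)^2 = (\<Sum>k\<in>UNIV. (al k)^2)" using norm_sq_vec[of a] unfolding al_def by simp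
        also have "\<dots> = (al m)^2 + (\<Sum>k\<in>UNIV-{m}. (al k)^2)" by (rule split)
        also have "(\<Sum>k\<in>UNIV-{m}. (al k)^2) = 0" using ak unfolding al_def by simp
        finally show ?thesis by simp
      qed
      have "(al m)^2 < 2 * b / (real CARD('n) - 1)" using hs card1 na by simp
      also have "2 * b / (real CARD('n) - 1) = 2 * b * Q"
      proof -
        have "2 * b / (real CARD('n) - 1) = 2 * b * ((real CARD('n) - 1) * Q) / (real CARD('n) - 1)"
          using hQ by simp
        also have "\<dots> = 2 * b * Q" using n1r by simp
        finally show ?thesis .
      qed
      finally have "(cmod (a$m))^2 < 2 * b * norm4_pow4 z" unfolding al_def Q_def .
      from c0_single[OF nz b c0 zm this] lm show False by blast
    qed
  qed
qed

theorem theorem11: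
  fixes a z :: "complex^'n" and \<beta> :: real
  assumes "CARD('n) \<ge> 2"
    and "\<beta> > 0"
    and "norm_inf a > norm1 a / 2"
    and "\<not> (card {k. a$k \<noteq> 0} = 1 \<and> (norm a)^2 \<ge> 2 * \<beta> / (real CARD('n) - 1))"
    and "local_min_on (sphere 0 1) (fobj a \<beta>) z"
    and "consistent_pt a \<beta> z"
  shows "global_min_on (sphere 0 1) (fobj a \<beta>) z"
proof -
  have st: "stationary_pt a \<beta> z" using assms(6) unfolding consistent_pt_def by blast
  have real: "adj_dot a z \<in> \<real>"
  proof -
    have "cnj (a$k) * z$k \<in> \<real>" for k
      using assms(6) unfolding consistent_pt_def by (cases "a$k = 0") auto
    then show ?thesis unfolding adj_dot_def by (intro sum_in_Reals) auto
  qed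
  consider "Re (adj_dot a z) = 0" | "Re (adj_dot a z) > 0" | "Re (adj_dot a z) < 0" by linarith
  then show ?thesis
  proof cases
    case 1
    then have "adj_dot a z = 0" using real by (metis complex_is_Real_iff complex_eq_iff zero_complex.sel)
    from c_zero_impossible[OF assms(1,2,3,4,5) st this] show ?thesis ..
  next
    case 2
    from main_pos[OF assms(2,3,5,6) this] show ?thesis .
  next
    case 3
    have "Re (adj_dot a (- z)) > 0" using 3 by (simp add: adj_dot_uminus)
    from main_pos[OF assms(2,3) neg_local_min[OF assms(5)] neg_consistent[OF assms(6)] this]
    have g: "global_min_on (sphere 0 1) (fobj a \<beta>) (- z)" .
    then show ?thesis unfolding global_min_on_def by (simp add: fobj_uminus)
  qed
qed


end
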